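(* Let $A,B\in\operatorname{Sym}(n,\mathbb{R})$ be linearly independent, form a non-dissipative pair, and satisfy $\operatorname{maxrank}\{A,B\}\ge3$. Then there exists $z\in\mathbb{R}^n$ with ${}^tzAz={}^tzBz=0$ such that $Az$ and $Bz$ are linearly independent (i.e. $\partial\Gamma_A$ and $\partial\Gamma_B$ intersect transversally at $z$).
   Context: $A,B$ form a non-dissipative pair if $0$ is the only positive semidefinite element of $\operatorname{span}_{\mathbb{R}}\{A,B\}$. $\operatorname{maxrank}\{A,B\}$ is the maximal rank of elements of $\operatorname{span}_{\mathbb{R}}\{A,B\}$. $\Gamma_M=\{z:{}^tzMz\le0\}$. *)

theory Defs
  imports "HOL-Analysis.Analysis"
begin

definition symmetric_matrix :: "real^'n^'n \<Rightarrow> bool" where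
  "symmetric_matrix M \<longleftrightarrow> transpose M = M"

definition psd_matrix :: "real^'n^'n \<Rightarrow> bool" where
  "psd_matrix M \<longleftrightarrow> symmetric_matrix M \<and> (\<forall>z. z \<bullet> (M *v z) \<ge> 0)"

definition rspan2 :: "real^'n^'n \<Rightarrow> real^'n^'n \<Rightarrow> (real^'n^'n) set" where
  "rspan2 A B = {s *\<^sub>R A + t *\<^sub>R B | s t. True}"

definition non_dissipative_pair :: "real^'n^'n \<Rightarrow> real^'n^'n \<Rightarrow> bool" where
  "non_dissipative_pair A B \<longleftrightarrow> (\<forall>M\<in>rspan2 A B. psd_matrix M \<longrightarrow> M = 0)"

definition maxrank2 :: "real^'n^'n \<Rightarrow> real^'n^'n \<Rightarrow> nat" where
  "maxrank2 A B = Max (rank ` rspan2 A B)"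

definition lin_indep2 :: "'a::real_vector \<Rightarrow> 'a \<Rightarrow> bool" where
  "lin_indep2 u v \<longleftrightarrow> (\<forall>s t::real. s *\<^sub>R u + t *\<^sub>R v = 0 \<longrightarrow> s = 0 \<and> t = 0)"

end

theory Submission
  imports Defs
begin


lemma sym_dot:
  fixes M :: "real^'n^'n"
  assumes "symmetric_matrix M"
  shows "x \<bullet> (M *v y) = y \<bullet> (M *v x)"
proof -
  have "x \<bullet> (M *v y) = (x v* M) \<bullet> y" by (simp add: dot_lmul_matrix)
  also have "x v* M = transpose M *v x" by simp
  also have "\<dots> = M *v x" using assms by (simp add: symmetric_matrix_def)
  finally show ?thesis by (simp add: inner_commute)
qed

lemma symmetric_comb:
  fixes A B :: "real^'n^'n"
  assumes "symmetric_matrix A" "symmetric_matrix B"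
  shows "symmetric_matrix (s *\<^sub>R A + t *\<^sub>R B)"
  using assms unfolding symmetric_matrix_def
  by (simp add: transpose_def vec_eq_iff)

lemma reg_construct:
  fixes N M :: "real^'n^'n"
  assumes sN: "symmetric_matrix N" and sM: "symmetric_matrix M"
    and Nz0: "N *v z0 = 0" and qMz0: "z0 \<bullet> (M *v z0) = 0"
    and qNw: "w \<bullet> (N *v w) = 0" and Nw: "N *v w \<noteq> 0"
    and c: "w \<bullet> (M *v z0) \<noteq> 0"
  defines "z \<equiv> (- (w \<bullet> (M *v w))) *\<^sub>R z0 + (2 * (w \<bullet> (M *v z0))) *\<^sub>R w"
  shows "z \<bullet> (N *v z) = 0" "z \<bullet> (M *v z) = 0" "lin_indep2 (N *v z) (M *v z)"
proof -
  define cc where "cc = w \<bullet> (M *v z0)"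
  define d where "d = w \<bullet> (M *v w)"
  have zdef: "z = (- d) *\<^sub>R z0 + (2 * cc) *\<^sub>R w" unfolding z_def cc_def d_def by simp
  have Nz: "N *v z = (2 * cc) *\<^sub>R (N *v w)"
    by (simp add: zdef algebra_simps Nz0)
  have z0Nw: "z0 \<bullet> (N *v w) = 0" using sym_dot[OF sN, of z0 w] Nz0 by simp
  have z0Mw: "z0 \<bullet> (M *v w) = cc" using sym_dot[OF sM, of z0 w] cc_def by simp
  have Mz: "M *v z = (- d) *\<^sub>R (M *v z0) + (2 * cc) *\<^sub>R (M *v w)"
    by (simp add: zdef algebra_simps)
  show "z \<bullet> (N *v z) = 0"
    unfolding Nz by (simp add: zdef inner_diff_left inner_add_left z0Nw qNw)
  show "z \<bullet> (M *v z) = 0"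
    unfolding Mz by (simp add: zdef inner_add_left inner_add_right z0Mw qMz0 d_def[symmetric] cc_def[symmetric] algebra_simps)
  show "lin_indep2 (N *v z) (M *v z)"
    unfolding lin_indep2_def
  proof (intro allI impI)
    fix s t :: real
    assume h: "s *\<^sub>R (N *v z) + t *\<^sub>R (M *v z) = 0"
    have "z0 \<bullet> (s *\<^sub>R (N *v z) + t *\<^sub>R (M *v z)) = 0" using h by simp
    then have "t * (2 * cc * cc) = 0"
      unfolding Nz Mz by (simp add: inner_add_right z0Nw z0Mw qMz0 algebra_simps)
    then have t0: "t = 0" using c cc_def by simp
    then have "s *\<^sub>R (2 * cc) *\<^sub>R (N *v w) = 0" using h Nz by simp
    then have "s = 0" using Nw c cc_def by simp
    with t0 show "s = 0 \<and> t = 0" by simp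
  qed
qed



lemma quad_two_roots:
  fixes a b c :: real
  assumes "a < 0" "c > 0"
  shows "\<exists>t1 t2. t1 \<noteq> t2 \<and> a*t1^2 + b*t1 + c = 0 \<and> a*t2^2 + b*t2 + c = 0"
proof -
  define D where "D = b^2 - 4*a*c"
  have Dpos: "D > 0" unfolding D_def using assms
    by (smt (verit) mult_neg_pos zero_le_power2)
  define s where "s = sqrt D"
  have s2: "s^2 = D" unfolding s_def using Dpos by simp
  have spos: "s > 0" unfolding s_def using Dpos by simp
  define t1 where "t1 = (-b + s)/(2*a)"
  define t2 where "t2 = (-b - s)/(2*a)"
  have a0: "a \<noteq> 0" using assms by simp
  have e1: "2*a*t1 + b = s" unfolding t1_def using a0 by (simp add: field_simps)
  have e2: "2*a*t2 + b = - s" unfolding t2_def using a0 by (simp add: field_simps)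
  have key: "4*a*(a*t^2 + b*t + c) = (2*a*t+b)^2 - D" for t
    unfolding D_def by (simp add: power2_eq_square algebra_simps)
  have r1: "a*t1^2 + b*t1 + c = 0"
  proof -
    have "4*a*(a*t1^2 + b*t1 + c) = 0" using key[of t1] e1 s2 by simp
    then show ?thesis using a0 by simp
  qed
  have r2: "a*t2^2 + b*t2 + c = 0"
  proof -
    have "4*a*(a*t2^2 + b*t2 + c) = 0" using key[of t2] e2 s2 by (simp add: power2_eq_square)
    then show ?thesis using a0 by simp
  qed
  have "t1 \<noteq> t2" using e1 e2 spos by auto
  with r1 r2 show ?thesis by blast
qed

lemma perturb_neg:
  fixes N :: "real^'n^'n"
  assumes sN: "symmetric_matrix N" and ny: "y \<bullet> (N *v y) < 0" and v: "v \<noteq> 0"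
  shows "\<exists>y'. y' \<bullet> (N *v y') < 0 \<and> y' \<bullet> v \<noteq> 0"
proof (cases "y \<bullet> v = 0")
  case False then show ?thesis using ny by blast
next
  case True
  define K where "K = \<bar>2 * (y \<bullet> (N *v v))\<bar> + \<bar>v \<bullet> (N *v v)\<bar> + 1"
  have Kpos: "K > 0" unfolding K_def by simp
  define e where "e = min 1 (- (y \<bullet> (N *v y)) / (2*K))"
  have "- (y \<bullet> (N *v y)) / (2*K) > 0" using ny Kpos by (intro divide_pos_pos) auto
  then have epos: "e > 0" unfolding e_def by simp
  have e1: "e \<le> 1" unfolding e_def by simp
  have eK: "e * K \<le> - (y \<bullet> (N *v y)) / 2"
  proof -
    define Q where "Q = - (y \<bullet> (N *v y))"
    have "e \<le> Q / (2*K)" unfolding e_def Q_def by simp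
    then have "e * (2*K) \<le> Q" using Kpos by (simp add: pos_le_divide_eq)
    then have "2*(e*K) \<le> Q" by (simp add: algebra_simps)
    then show ?thesis unfolding Q_def by linarith
  qed
  define y' where "y' = y + e *\<^sub>R v"
  have q: "y' \<bullet> (N *v y') = y \<bullet> (N *v y) + e * (2 * (y \<bullet> (N *v v))) + e^2 * (v \<bullet> (N *v v))"
    unfolding y'_def using sym_dot[OF sN, of v y]
    by (simp add: algebra_simps inner_add_left inner_add_right power2_eq_square)
  have b1: "e * (2 * (y \<bullet> (N *v v))) \<le> e * \<bar>2 * (y \<bullet> (N *v v))\<bar>"
    using epos by (simp add: mult_left_mono)
  have b2: "e^2 * (v \<bullet> (N *v v)) \<le> e * \<bar>v \<bullet> (N *v v)\<bar>"
  proof -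
    have "e^2 * (v \<bullet> (N *v v)) \<le> e^2 * \<bar>v \<bullet> (N *v v)\<bar>" by (simp add: mult_left_mono)
    also have "\<dots> \<le> e * \<bar>v \<bullet> (N *v v)\<bar>"
      using epos e1 by (simp add: power2_eq_square mult_right_mono)
    finally show ?thesis .
  qed
  have "e * (2 * (y \<bullet> (N *v v))) + e^2 * (v \<bullet> (N *v v)) \<le> e * K"
  proof -
    have "e * K = e * \<bar>2 * (y \<bullet> (N *v v))\<bar> + e * \<bar>v \<bullet> (N *v v)\<bar> + e"
      unfolding K_def by (simp add: algebra_simps)
    then show ?thesis using b1 b2 epos by linarith
  qed
  then have "y' \<bullet> (N *v y') < 0" using q eK ny by linarith
  moreover have "y' \<bullet> v \<noteq> 0" unfolding y'_def using True epos v by (simp add: inner_add_left)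
  ultimately show ?thesis by blast
qed

lemma exist_w:
  fixes N :: "real^'n^'n"
  assumes sN: "symmetric_matrix N" and px: "x \<bullet> (N *v x) > 0" and ny: "y \<bullet> (N *v y) < 0"
    and v: "v \<noteq> 0"
  shows "\<exists>w. w \<bullet> (N *v w) = 0 \<and> N *v w \<noteq> 0 \<and> w \<bullet> v \<noteq> 0"
proof -
  obtain y' where ny': "y' \<bullet> (N *v y') < 0" and yv: "y' \<bullet> v \<noteq> 0"
    using perturb_neg[OF sN ny v] by blast
  define a where "a = y' \<bullet> (N *v y')"
  define b where "b = 2 * (x \<bullet> (N *v y'))"
  define c where "c = x \<bullet> (N *v x)"
  have qexp: "(x + t *\<^sub>R y') \<bullet> (N *v (x + t *\<^sub>R y')) = a*t^2 + b*t + c" for t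
    unfolding a_def b_def c_def using sym_dot[OF sN, of y' x]
    by (simp add: algebra_simps inner_add_left inner_add_right power2_eq_square)
  have Nne: "N *v (x + t *\<^sub>R y') \<noteq> 0" if r: "a*t^2 + b*t + c = 0" for t
  proof
    assume h: "N *v (x + t *\<^sub>R y') = 0"
    have "y' \<bullet> (N *v (x + t *\<^sub>R y')) = 0" using h by simp
    then have "y' \<bullet> (N *v x) + t * a = 0"
      unfolding a_def by (simp add: algebra_simps inner_add_right)
    then have "b = -2*a*t" unfolding b_def using sym_dot[OF sN, of y' x] by (simp add: algebra_simps)
    then have "c = a*t^2" using r by (simp add: power2_eq_square algebra_simps)
    moreover have "a*t^2 \<le> 0" using ny' unfolding a_def by (simp add: mult_nonpos_nonneg)
    ultimately show False using px c_def by simp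
  qed
  obtain t1 t2 where t12: "t1 \<noteq> t2" and r1: "a*t1^2 + b*t1 + c = 0" and r2: "a*t2^2 + b*t2 + c = 0"
    using quad_two_roots[of a c b] ny' px unfolding a_def c_def by blast
  have "(x + t1 *\<^sub>R y') \<bullet> v \<noteq> 0 \<or> (x + t2 *\<^sub>R y') \<bullet> v \<noteq> 0"
  proof (rule ccontr)
    assume "\<not> ?thesis"
    then have "x \<bullet> v + t1 * (y' \<bullet> v) = 0" "x \<bullet> v + t2 * (y' \<bullet> v) = 0"
      by (auto simp: inner_add_left)
    then have "t1 * (y' \<bullet> v) = t2 * (y' \<bullet> v)" by linarith
    then show False using t12 yv by simp
  qed
  then show ?thesis using qexp Nne r1 r2 by metis
qed



lemma qf_neg: "(- z) \<bullet> ((A::real^'n^'n) *v (- z)) = z \<bullet> (A *v z)"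
proof -
  have "A *v (- z) = - (A *v z)"
    using matrix_vector_mult_scaleR[of A "-1" z] by simp
  then show ?thesis by simp
qed

lemma qf_scale: "(k *\<^sub>R z) \<bullet> ((A::real^'n^'n) *v (k *\<^sub>R z)) = k^2 * (z \<bullet> (A *v z))"
  by (simp add: matrix_vector_mult_scaleR power2_eq_square)

lemma cont_qf: "continuous_on S (\<lambda>z. z \<bullet> ((A::real^'n^'n) *v z))"
proof -
  have "bounded_linear (\<lambda>z. (A::real^'n^'n) *v z)"
    by (simp add: linear_conv_bounded_linear)
  then have "continuous_on S (\<lambda>z. (A::real^'n^'n) *v z)"
    by (simp add: linear_continuous_on)
  then show ?thesis by (intro continuous_intros)
qed

lemma sphere_setup:
  fixes U :: "(real^'n) set"
  assumes U: "subspace U" and dimU: "dim U \<ge> 3"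
  defines "S \<equiv> sphere 0 1 \<inter> U"
  shows "simply_connected S" "locally path_connected S" "connected S" "compact S" "S \<noteq> {}"
    "\<And>z. z \<in> S \<Longrightarrow> - z \<in> S"
proof -
  have affU: "affine U" using U by (simp add: subspace_imp_affine)
  have int: "interior (cball (0::real^'n) 1) \<inter> U \<noteq> {}"
  proof -
    have "(0::real^'n) \<in> interior (cball 0 1) \<inter> U" using subspace_0[OF U] by simp
    then show ?thesis by blast
  qed
  have relfr: "rel_frontier (cball 0 1 \<inter> U) = S"
    using convex_affine_rel_frontier_Int[OF convex_cball affU int] by (simp add: S_def)
  have "aff_dim (U \<inter> cball 0 1) = aff_dim U"
    by (rule aff_dim_convex_Int_nonempty_interior) (use U int subspace_imp_convex in auto)
  then have aff: "aff_dim (cball 0 1 \<inter> U) = int (dim U)"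
    using aff_dim_subspace[OF U] by (simp add: Int_commute)
  have cvx: "convex (cball (0::real^'n) 1 \<inter> U)"
    using U by (simp add: convex_Int subspace_imp_convex)
  have bdd: "bounded (cball (0::real^'n) 1 \<inter> U)" by (simp add: bounded_Int)
  show sc: "simply_connected S"
    using simply_connected_sphere_gen[OF cvx bdd] aff dimU relfr by simp
  show "locally path_connected S"
    using ENR_imp_locally_path_connected[OF ENR_rel_frontier_convex[OF bdd cvx]] relfr by simp
  show "connected S"
    using sc simply_connected_imp_path_connected path_connected_imp_connected by blast
  show "compact S" unfolding S_def
    using compact_Int_closed[OF compact_sphere closed_subspace[OF U]] by simp
  have "\<not> U \<subseteq> {0}" using dimU dim_eq_0[of U] by linarith
  then obtain u where u: "u \<in> U" "u \<noteq> 0" by blast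
  have "(1 / norm u) *\<^sub>R u \<in> S" unfolding S_def using u U
    by (simp add: subspace_scale)
  then show "S \<noteq> {}" by blast
  show "\<And>z. z \<in> S \<Longrightarrow> - z \<in> S" unfolding S_def using U by (simp add: subspace_neg)
qed



lemma calabi_lift:
  fixes A B :: "real^'n^'n" and U :: "(real^'n) set"
  assumes U: "subspace U" and dimU: "dim U \<ge> 3"
    and nz: "\<And>z. z \<in> U \<Longrightarrow> z \<noteq> 0 \<Longrightarrow> z \<bullet> (A *v z) \<noteq> 0 \<or> z \<bullet> (B *v z) \<noteq> 0"
  obtains th rh where "continuous_on (sphere 0 1 \<inter> U) th"
    "\<And>z. z \<in> sphere 0 1 \<inter> U \<Longrightarrow> rh z > 0"
    "\<And>z. z \<in> sphere 0 1 \<inter> U \<Longrightarrow> z \<bullet> (A *v z) = rh z * cos (th z)"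
    "\<And>z. z \<in> sphere 0 1 \<inter> U \<Longrightarrow> z \<bullet> (B *v z) = rh z * sin (th z)"
    "\<And>z. z \<in> sphere 0 1 \<inter> U \<Longrightarrow> th (- z) = th z"
proof -
  define S where "S = sphere 0 1 \<inter> U"
  note ss = sphere_setup[OF U dimU, folded S_def]
  define f where "f z = complex_of_real (z \<bullet> (A *v z)) + \<i> * complex_of_real (z \<bullet> (B *v z))" for z
  have contf: "continuous_on S f" unfolding f_def
    by (intro continuous_intros cont_qf)
  have fnz: "f z \<noteq> 0" if "z \<in> S" for z
  proof -
    have "z \<noteq> 0" using that unfolding S_def by auto
    then have "z \<bullet> (A *v z) \<noteq> 0 \<or> z \<bullet> (B *v z) \<noteq> 0" using nz that unfolding S_def by auto
    then show ?thesis unfolding f_def by (auto simp: complex_eq_iff)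
  qed
  obtain g where contg: "continuous_on S g" and fg: "\<And>x. x \<in> S \<Longrightarrow> f x = exp (g x)"
    using continuous_logarithm_on_simply_connected[OF contf ss(1) ss(2) fnz] by blast
  have fneg: "f (- z) = f z" for z unfolding f_def using qf_neg[of z A] qf_neg[of z B] by presburger
  define k where "k z = g (- z) - g z" for z
  have contk: "continuous_on S k" unfolding k_def
  proof (intro continuous_intros contg)
    show "continuous_on S (\<lambda>x. g (- x))"
      by (rule continuous_on_compose2[OF contg]) (auto intro: continuous_intros ss(6))
  qed
  have kint: "\<exists>n::int. k z = of_int (2 * n) * pi * \<i>" if "z \<in> S" for z
  proof -
    have "exp (g (- z)) = exp (g z)" using fg[OF that] fg[OF ss(6)[OF that]] fneg[of z] by simp
    then obtain n :: int where "g (- z) = g z + of_int (2 * n) * pi * \<i>"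
      using exp_eq by blast
    then show ?thesis unfolding k_def by auto
  qed
  have "k constant_on S"
  proof (rule continuous_discrete_range_constant[OF ss(3) contk])
    fix x assume x: "x \<in> S"
    show "\<exists>e>0. \<forall>y. y \<in> S \<and> k y \<noteq> k x \<longrightarrow> e \<le> norm (k y - k x)"
    proof (intro exI[of _ "2*pi"] conjI allI impI)
      show "2 * pi > 0" by simp
      fix y assume y: "y \<in> S \<and> k y \<noteq> k x"
      obtain n :: int where n: "k x = of_int (2 * n) * pi * \<i>" using kint x by blast
      obtain m :: int where m: "k y = of_int (2 * m) * pi * \<i>" using kint y by blast
      have mn: "m \<noteq> n" using y n m by auto
      have nr: "norm (complex_of_real r * \<i>) = \<bar>r\<bar>" for r by (simp add: norm_mult)
      have "k y - k x = of_real (2 * pi * of_int (m - n)) * \<i>" using n m by (simp add: algebra_simps)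
      then have "norm (k y - k x) = \<bar>2 * pi * of_int (m - n)\<bar>" using nr by presburger
      then have "norm (k y - k x) = 2 * pi * \<bar>of_int (m - n)\<bar>" by (simp add: abs_mult)
      moreover have "\<bar>of_int (m - n) :: real\<bar> \<ge> 1" using mn by linarith
      ultimately show "2 * pi \<le> norm (k y - k x)" by (simp add: mult_left_mono[of 1, simplified])
    qed
  qed
  then obtain C where C: "\<And>z. z \<in> S \<Longrightarrow> k z = C" by (auto simp: constant_on_def)
  obtain z0 where z0: "z0 \<in> S" using ss(5) by blast
  have "k (- z0) = - k z0" unfolding k_def by simp
  then have C0: "C = 0" using C[OF z0] C[OF ss(6)[OF z0]] by simp
  have geven: "g (- z) = g z" if "z \<in> S" for z using C[OF that] C0 unfolding k_def by simp
  define th where "th z = Im (g z)" for z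
  define rh where "rh z = exp (Re (g z))" for z
  show ?thesis
  proof (rule that[of th rh, folded S_def])
    show "continuous_on S th" unfolding th_def by (intro continuous_intros contg)
    show "rh z > 0" for z unfolding rh_def by simp
    show "z \<bullet> (A *v z) = rh z * cos (th z)" if "z \<in> S" for z
    proof -
      have "z \<bullet> (A *v z) = Re (f z)" unfolding f_def by simp
      also have "\<dots> = rh z * cos (th z)" unfolding fg[OF that] rh_def th_def by (simp add: Re_exp)
      finally show ?thesis .
    qed
    show "z \<bullet> (B *v z) = rh z * sin (th z)" if "z \<in> S" for z
    proof -
      have "z \<bullet> (B *v z) = Im (f z)" unfolding f_def by simp
      also have "\<dots> = rh z * sin (th z)" unfolding fg[OF that] rh_def th_def by (simp add: Im_exp)
      finally show ?thesis .
    qed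
    show "th (- z) = th z" if "z \<in> S" for z unfolding th_def using geven[OF that] by simp
  qed
qed



lemma qf_comb: "(c *\<^sub>R x + s *\<^sub>R y) \<bullet> ((A::real^'n^'n) *v (c *\<^sub>R x + s *\<^sub>R y))
   = c^2 * (x \<bullet> (A *v x)) + c * s * (x \<bullet> (A *v y) + y \<bullet> (A *v x)) + s^2 * (y \<bullet> (A *v y))"
  by (simp add: matrix_vector_right_distrib matrix_vector_mult_scaleR inner_add_left inner_add_right
      power2_eq_square algebra_simps)

lemma calabi:
  fixes A B :: "real^'n^'n" and U :: "(real^'n) set"
  assumes U: "subspace U" and dimU: "dim U \<ge> 3"
    and nz: "\<And>z. z \<in> U \<Longrightarrow> z \<noteq> 0 \<Longrightarrow> z \<bullet> (A *v z) \<noteq> 0 \<or> z \<bullet> (B *v z) \<noteq> 0"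
  shows "\<exists>c d. \<forall>z\<in>U. z \<noteq> 0 \<longrightarrow> c * (z \<bullet> (A *v z)) + d * (z \<bullet> (B *v z)) > 0"
proof -
  define S where "S = sphere 0 1 \<inter> U"
  note ss = sphere_setup[OF U dimU, folded S_def]
  obtain th rh where thc: "continuous_on S th" and rhp: "\<And>z. z \<in> S \<Longrightarrow> rh z > 0"
    and qa: "\<And>z. z \<in> S \<Longrightarrow> z \<bullet> (A *v z) = rh z * cos (th z)"
    and qb: "\<And>z. z \<in> S \<Longrightarrow> z \<bullet> (B *v z) = rh z * sin (th z)"
    and thev: "\<And>z. z \<in> S \<Longrightarrow> th (- z) = th z"
    using calabi_lift[OF U dimU nz, folded S_def] by metis
  obtain z1 where z1: "z1 \<in> S" and z1min: "\<And>y. y \<in> S \<Longrightarrow> th z1 \<le> th y"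
    using continuous_attains_inf[OF ss(4) ss(5) thc] by blast
  obtain zM where zM: "zM \<in> S" and zMmax: "\<And>y. y \<in> S \<Longrightarrow> th y \<le> th zM"
    using continuous_attains_sup[OF ss(4) ss(5) thc] by blast
  define m where "m = th z1"
  define M where "M = th zM"
  show ?thesis
  proof (cases "M - m < pi")
    case True
    define mid where "mid = (m + M) / 2"
    show ?thesis
    proof (intro exI ballI impI)
      fix z assume z: "z \<in> U" "z \<noteq> 0"
      define z' where "z' = (1 / norm z) *\<^sub>R z"
      have z'S: "z' \<in> S" unfolding z'_def S_def using z U by (simp add: subspace_scale)
      have zz: "z = norm z *\<^sub>R z'" unfolding z'_def using z by simp
      have "m \<le> th z'" "th z' \<le> M" using z1min[OF z'S] zMmax[OF z'S] m_def M_def by auto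
      then have "- (pi/2) < th z' - mid" "th z' - mid < pi/2" using True unfolding mid_def by (auto simp: field_simps)
      then have cpos: "cos (th z' - mid) > 0" by (rule cos_gt_zero_pi)
      have "cos mid * (z' \<bullet> (A *v z')) + sin mid * (z' \<bullet> (B *v z')) = rh z' * cos (th z' - mid)"
        using qa[OF z'S] qb[OF z'S] by (simp add: cos_diff algebra_simps)
      also have "\<dots> > 0" using rhp[OF z'S] cpos by simp
      finally have pos: "cos mid * (z' \<bullet> (A *v z')) + sin mid * (z' \<bullet> (B *v z')) > 0" .
      have "cos mid * (z \<bullet> (A *v z)) + sin mid * (z \<bullet> (B *v z))
          = (norm z)^2 * (cos mid * (z' \<bullet> (A *v z')) + sin mid * (z' \<bullet> (B *v z')))"
      proof -
        have hA: "z \<bullet> (A *v z) = (norm z)^2 * (z' \<bullet> (A *v z'))" by (metis qf_scale zz)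
        have hB: "z \<bullet> (B *v z) = (norm z)^2 * (z' \<bullet> (B *v z'))" by (metis qf_scale zz)
        show ?thesis unfolding hA hB by (simp add: algebra_simps)
      qed
      also have "\<dots> > 0" using pos z by simp
      finally show "cos mid * (z \<bullet> (A *v z)) + sin mid * (z \<bullet> (B *v z)) > 0" .
    qed
  next
    case False
    have conn: "connected (th ` S)" using connected_continuous_image[OF thc ss(3)] .
    have "m + pi \<in> th ` S"
      by (rule connectedD_interval[OF conn, of m M]) (use z1 zM m_def M_def False in auto)
    then obtain z2 where z2: "z2 \<in> S" and thz2: "th z2 = m + pi" by (metis imageE)
    define r1 where "r1 = rh z1"
    define r2 where "r2 = rh z2"
    have r1p: "r1 > 0" and r2p: "r2 > 0" using rhp z1 z2 r1_def r2_def by auto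
    have a1: "z1 \<bullet> (A *v z1) = r1 * cos m" and a2: "z1 \<bullet> (B *v z1) = r1 * sin m"
      using qa[OF z1] qb[OF z1] r1_def m_def by auto
    have b1: "z2 \<bullet> (A *v z2) = - r2 * cos m" and b2: "z2 \<bullet> (B *v z2) = - r2 * sin m"
      using qa[OF z2] qb[OF z2] r2_def thz2 by auto
    define w where "w t = cos t *\<^sub>R z1 + sin t *\<^sub>R z2" for t
    have wnz: "w t \<noteq> 0" for t
    proof
      assume h: "w t = 0"
      have nz1: "z1 \<noteq> 0" using z1 unfolding S_def by auto
      show False
      proof (cases "sin t = 0")
        case True
        then have "cos t \<noteq> 0" using sin_cos_squared_add[of t] by auto
        then show False using h True nz1 unfolding w_def by simp
      next
        case sF: False
        define l where "l = - cos t / sin t"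
        have "z2 = l *\<^sub>R z1"
        proof -
          have "sin t *\<^sub>R z2 = - (cos t *\<^sub>R z1)" using h unfolding w_def by (simp add: eq_neg_iff_add_eq_0 add.commute)
          then have "(1 / sin t) *\<^sub>R (sin t *\<^sub>R z2) = (1 / sin t) *\<^sub>R (- (cos t *\<^sub>R z1))" by simp
          then show ?thesis using sF unfolding l_def by (simp add: divide_inverse)
        qed
        then have q2A: "z2 \<bullet> (A *v z2) = l^2 * (z1 \<bullet> (A *v z1))"
          and q2B: "z2 \<bullet> (B *v z2) = l^2 * (z1 \<bullet> (B *v z1))"
          using qf_scale[of l z1 A] qf_scale[of l z1 B] by simp_all
        have e1: "(r2 + l^2 * r1) * cos m = 0" using q2A a1 b1 by (simp add: algebra_simps)
        have e2: "(r2 + l^2 * r1) * sin m = 0" using q2B a2 b2 by (simp add: algebra_simps)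
        have "cos m \<noteq> 0 \<or> sin m \<noteq> 0"
        proof (rule ccontr)
          assume "\<not> (cos m \<noteq> 0 \<or> sin m \<noteq> 0)"
          then have "cos m = 0" "sin m = 0" by auto
          then show False using sin_cos_squared_add[of m] by simp
        qed
        then have "r2 + l^2 * r1 = 0" using e1 e2 by auto
        then have "- r2 = l^2 * r1" by simp
        moreover have "l^2 * r1 \<ge> 0" using r1p by simp
        ultimately show False using r2p by simp
      qed
    qed
    define p where "p t = (1 / norm (w t)) *\<^sub>R w t" for t
    have pS: "p t \<in> S" for t
      unfolding p_def S_def w_def using wnz[of t] z1 z2 U
      by (auto simp: S_def w_def subspace_add subspace_scale)
    have contw: "continuous_on T w" for T unfolding w_def by (intro continuous_intros)
    have contp: "continuous_on T p" for T unfolding p_def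
      using wnz by (intro continuous_intros contw) auto
    define G where "G t = th (p t)" for t
    have contG: "continuous_on T G" for T unfolding G_def
      by (rule continuous_on_compose2[OF thc contp]) (use pS in auto)
    have nz1: "norm z1 = 1" and nz2: "norm z2 = 1" using z1 z2 unfolding S_def by auto
    have G0: "G 0 = m" unfolding G_def p_def w_def m_def using nz1 by simp
    have G1: "G (pi/2) = m + pi" unfolding G_def p_def w_def using nz2 thz2 by simp
    have G2: "G pi = m" unfolding G_def p_def w_def m_def using nz1 thev[OF z1] by simp
    define D where "D = (r1 * cos m) * (z1 \<bullet> (B *v z2) + z2 \<bullet> (B *v z1))
                      - (r1 * sin m) * (z1 \<bullet> (A *v z2) + z2 \<bullet> (A *v z1))"
    have key: "cos t * sin t * D > 0" if Gt: "G t = m + pi/2" for t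
    proof -
      define P where "P = p t"
      have PS: "P \<in> S" using pS P_def by simp
      have thP: "th P = m + pi/2" using Gt G_def P_def by simp
      have "(r1 * cos m) * (P \<bullet> (B *v P)) - (r1 * sin m) * (P \<bullet> (A *v P)) = r1 * rh P"
      proof -
        have hA: "P \<bullet> (A *v P) = - (sin m * rh P)" and hB: "P \<bullet> (B *v P) = cos m * rh P"
          using qa[OF PS] qb[OF PS] thP by (simp_all add: sin_add cos_add)
        have "(r1 * cos m) * (P \<bullet> (B *v P)) - (r1 * sin m) * (P \<bullet> (A *v P))
            = r1 * rh P * (cos m * cos m + sin m * sin m)"
          unfolding hA hB by algebra
        then show ?thesis unfolding sin_cos_squared_add3 by simp
      qed
      then have pos1: "(r1 * cos m) * (P \<bullet> (B *v P)) - (r1 * sin m) * (P \<bullet> (A *v P)) > 0"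
        using r1p rhp[OF PS] by simp
      define nw where "nw = norm (w t)"
      have nwp: "nw > 0" using wnz nw_def by simp
      have PA: "P \<bullet> (A *v P) = (1/nw)^2 * (w t \<bullet> (A *v w t))"
        unfolding P_def p_def nw_def by (rule qf_scale)
      have PB: "P \<bullet> (B *v P) = (1/nw)^2 * (w t \<bullet> (B *v w t))"
        unfolding P_def p_def nw_def by (rule qf_scale)
      have "(r1 * cos m) * (w t \<bullet> (B *v w t)) - (r1 * sin m) * (w t \<bullet> (A *v w t)) = cos t * sin t * D"
        unfolding w_def qf_comb D_def using a1 a2 b1 b2
        by (simp add: algebra_simps power2_eq_square)
      moreover have "(r1 * cos m) * ((1/nw)^2 * (w t \<bullet> (B *v w t))) - (r1 * sin m) * ((1/nw)^2 * (w t \<bullet> (A *v w t)))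
          = (1/nw)^2 * ((r1 * cos m) * (w t \<bullet> (B *v w t)) - (r1 * sin m) * (w t \<bullet> (A *v w t)))"
        by algebra
      ultimately have "(1/nw)^2 * (cos t * sin t * D) > 0"
        using pos1 unfolding PA PB by simp
      then show ?thesis using nwp by (simp add: zero_less_mult_iff)
    qed
    obtain t1 where t1: "0 \<le> t1" "t1 \<le> pi/2" "G t1 = m + pi/2"
      using IVT'[of G 0 "m + pi/2" "pi/2"] G0 G1 contG by auto
    have "t1 \<noteq> 0" using t1(3) G0 pi_gt_zero by (metis add.right_neutral add_left_cancel half_gt_zero less_irrefl)
    moreover have "t1 \<noteq> pi/2"
    proof
      assume h: "t1 = pi/2"
      have "m + pi/2 = m + pi" using t1(3)[unfolded h] G1 by simp
      then show False using pi_gt_zero by simp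
    qed
    ultimately have t1': "0 < t1" "t1 < pi/2" using t1 by auto
    obtain t2 where t2: "pi/2 \<le> t2" "t2 \<le> pi" "G t2 = m + pi/2"
      using IVT2'[of G pi "m + pi/2" "pi/2"] G2 G1 contG by auto
    have "t2 \<noteq> pi" using t2(3) G2 pi_gt_zero by (metis add.right_neutral add_left_cancel half_gt_zero less_irrefl)
    moreover have "t2 \<noteq> pi/2"
    proof
      assume h: "t2 = pi/2"
      have "m + pi/2 = m + pi" using t2(3)[unfolded h] G1 by simp
      then show False using pi_gt_zero by simp
    qed
    ultimately have t2': "pi/2 < t2" "t2 < pi" using t2 by auto
    have c1: "cos t1 > 0" using t1' by (intro cos_gt_zero_pi) auto
    have s1: "sin t1 > 0" using t1' by (intro sin_gt_zero) auto
    have c2: "cos t2 < 0" using t2' by (intro cos_lt_zero_pi) auto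
    have s2: "sin t2 > 0" using t2' by (intro sin_gt_zero) auto
    have "cos t1 * sin t1 > 0" using c1 s1 by simp
    then have Dp: "D > 0" using zero_less_mult_pos[OF key[OF t1(3)]] by blast
    have n2: "- (cos t2 * sin t2) > 0" using c2 s2 by (simp add: mult_neg_pos)
    have "(- (cos t2 * sin t2)) * (- D) > 0" using key[OF t2(3)] by simp
    then have "- D > 0" using zero_less_mult_pos[OF _ n2] by blast
    then show ?thesis using Dp by simp
  qed
qed



lemma finish:
  fixes N M :: "real^'n^'n"
  assumes sN: "symmetric_matrix N" and sM: "symmetric_matrix M"
    and Nz0: "N *v z0 = 0" and qM: "z0 \<bullet> (M *v z0) = 0" and Mz0: "M *v z0 \<noteq> 0"
    and px: "x \<bullet> (N *v x) > 0" and ny: "y \<bullet> (N *v y) < 0"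
  shows "\<exists>z. z \<bullet> (N *v z) = 0 \<and> z \<bullet> (M *v z) = 0 \<and> lin_indep2 (N *v z) (M *v z)"
proof -
  obtain w where w: "w \<bullet> (N *v w) = 0" "N *v w \<noteq> 0" "w \<bullet> (M *v z0) \<noteq> 0"
    using exist_w[OF sN px ny Mz0] by blast
  show ?thesis using reg_construct[OF sN sM Nz0 qM w] by blast
qed

lemma mv_lin: "(s *\<^sub>R A + t *\<^sub>R B) *v z = s *\<^sub>R (A *v z) + t *\<^sub>R (B *v (z::real^'n))"
  by (simp add: vec_eq_iff matrix_vector_mult_def sum.distrib sum_distrib_left algebra_simps)

lemma qf_lin: "z \<bullet> ((s *\<^sub>R A + t *\<^sub>R B) *v z) = s * (z \<bullet> (A *v z)) + t * (z \<bullet> (B *v (z::real^'n)))"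
  by (simp add: mv_lin inner_add_right)

theorem theorem2p9:
  fixes A B :: "real^'n^'n"
  assumes "symmetric_matrix A" and "symmetric_matrix B"
    and "lin_indep2 A B"
    and "non_dissipative_pair A B"
    and "maxrank2 A B \<ge> 3"
  shows "\<exists>z :: real^'n. z \<bullet> (A *v z) = 0 \<and> z \<bullet> (B *v z) = 0
           \<and> lin_indep2 (A *v z) (B *v z)"
proof -
  note sA = assms(1) and sB = assms(2) and ind = assms(3) and nd = assms(4) and mr = assms(5)
  have inspan: "s *\<^sub>R A + t *\<^sub>R B \<in> rspan2 A B" for s t unfolding rspan2_def by blast
  have zero_comb: "s = 0 \<and> t = 0" if "s *\<^sub>R A + t *\<^sub>R B = 0" for s t
    using ind that unfolding lin_indep2_def by blast
  have nopsd: "\<not> psd_matrix (s *\<^sub>R A + t *\<^sub>R B)" if "\<not> (s = 0 \<and> t = 0)" for s t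
    using nd inspan[of s t] zero_comb[of s t] that unfolding non_dissipative_pair_def by blast
  have fin: "finite (rank ` rspan2 A B)"
  proof (rule finite_subset[of _ "{..CARD('n)}"])
    show "rank ` rspan2 A B \<subseteq> {..CARD('n)}"
    proof (rule image_subsetI)
      fix M :: "real^'n^'n"
      show "rank M \<in> {..CARD('n)}" using rank_bound[of M] by simp
    qed
  qed simp
  have ne: "rank ` rspan2 A B \<noteq> {}" using inspan[of 1 0] by blast
  have "maxrank2 A B \<in> rank ` rspan2 A B" unfolding maxrank2_def using Max_in[OF fin ne] .
  then obtain M0 where M0a: "M0 \<in> rspan2 A B" and M0b: "rank M0 = maxrank2 A B" by (metis imageE)
  then have M0: "M0 \<in> rspan2 A B" "rank M0 \<ge> 3" using mr by auto
  then obtain s0 t0 where M0eq: "M0 = s0 *\<^sub>R A + t0 *\<^sub>R B" unfolding rspan2_def by blast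
  define X where "X = range (\<lambda>x. A *v x) \<union> range (\<lambda>x. B *v x)"
  define U where "U = span X"
  have subU: "subspace U" unfolding U_def by simp
  have AX: "A *v x \<in> U" and BX: "B *v x \<in> U" for x unfolding U_def X_def by (auto intro: span_base)
  have "range (\<lambda>x. M0 *v x) \<subseteq> U"
  proof
    fix y assume "y \<in> range (\<lambda>x. M0 *v x)"
    then obtain x where "y = M0 *v x" by blast
    then have "y = s0 *\<^sub>R (A *v x) + t0 *\<^sub>R (B *v x)" using M0eq mv_lin by simp
    then show "y \<in> U" using AX BX subU by (simp add: subspace_add subspace_scale)
  qed
  then have "dim (range (\<lambda>x. M0 *v x)) \<le> dim U" by (rule dim_subset)
  then have dimU: "dim U \<ge> 3" using M0(2) rank_dim_range[of M0] by linarith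
  have kill: "A *v k = 0 \<and> B *v k = 0" if ko: "\<And>u. u \<in> U \<Longrightarrow> k \<bullet> u = 0" for k
  proof -
    have "(A *v k) \<bullet> (A *v k) = k \<bullet> (A *v (A *v k))" using sym_dot[OF sA, of k "A *v k"] by simp
    also have "\<dots> = 0" using ko AX by blast
    finally have 1: "A *v k = 0" by simp
    have "(B *v k) \<bullet> (B *v k) = k \<bullet> (B *v (B *v k))" using sym_dot[OF sB, of k "B *v k"] by simp
    also have "\<dots> = 0" using ko BX by blast
    finally have 2: "B *v k = 0" by simp
    show ?thesis using 1 2 by simp
  qed
  have "\<exists>z0\<in>U. z0 \<noteq> 0 \<and> z0 \<bullet> (A *v z0) = 0 \<and> z0 \<bullet> (B *v z0) = 0"
  proof (rule ccontr)
    assume "\<not> ?thesis"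
    then have nzU: "\<And>z. z \<in> U \<Longrightarrow> z \<noteq> 0 \<Longrightarrow> z \<bullet> (A *v z) \<noteq> 0 \<or> z \<bullet> (B *v z) \<noteq> 0" by blast
    obtain c d where cd: "\<And>z. z \<in> U \<Longrightarrow> z \<noteq> 0 \<Longrightarrow> c * (z \<bullet> (A *v z)) + d * (z \<bullet> (B *v z)) > 0"
      using calabi[OF subU dimU nzU] by blast
    define P where "P = c *\<^sub>R A + d *\<^sub>R B"
    have "psd_matrix P"
      unfolding psd_matrix_def
    proof
      show "symmetric_matrix P" unfolding P_def using symmetric_comb[OF sA sB] .
      show "\<forall>x. 0 \<le> x \<bullet> (P *v x)"
      proof
        fix x :: "real^'n"
        obtain y k where y: "y \<in> span X" and k: "\<And>w. w \<in> span X \<Longrightarrow> orthogonal k w"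
          and xyk: "x = y + k"
          using orthogonal_subspace_decomp_exists[of X x] by metis
        have "A *v k = 0 \<and> B *v k = 0"
        proof (rule kill)
          fix u assume "u \<in> U" then show "k \<bullet> u = 0" using k unfolding U_def orthogonal_def by blast
        qed
        then have Pk: "P *v k = 0" unfolding P_def mv_lin by simp
        have sP: "symmetric_matrix P" unfolding P_def using symmetric_comb[OF sA sB] .
        have "x \<bullet> (P *v x) = y \<bullet> (P *v y) + k \<bullet> (P *v y)"
          unfolding xyk by (simp add: matrix_vector_right_distrib Pk inner_add_left)
        also have "k \<bullet> (P *v y) = 0" using sym_dot[OF sP, of k y] Pk by simp
        also have "y \<bullet> (P *v y) = c * (y \<bullet> (A *v y)) + d * (y \<bullet> (B *v y))"
          unfolding P_def qf_lin ..
        finally have eq: "x \<bullet> (P *v x) = c * (y \<bullet> (A *v y)) + d * (y \<bullet> (B *v y))" by simp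
        show "0 \<le> x \<bullet> (P *v x)"
        proof (cases "y = 0")
          case True then show ?thesis using eq by simp
        next
          case False
          have "y \<in> U" using y unfolding U_def .
          then show ?thesis using eq cd[of y] False by simp
        qed
      qed
    qed
    then have "c = 0 \<and> d = 0" using nopsd[of c d] unfolding P_def by blast
    moreover have "\<not> U \<subseteq> {0}" using dimU dim_eq_0[of U] by linarith
    then obtain u where "u \<in> U" "u \<noteq> 0" by blast
    ultimately show False using cd[of u] by simp
  qed
  then obtain z0 where z0U: "z0 \<in> U" and z0nz: "z0 \<noteq> 0"
    and qa0: "z0 \<bullet> (A *v z0) = 0" and qb0: "z0 \<bullet> (B *v z0) = 0" by blast
  have notK: "\<not> (A *v z0 = 0 \<and> B *v z0 = 0)"
  proof
    assume h: "A *v z0 = 0 \<and> B *v z0 = 0"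
    have "orthogonal z0 u" if "u \<in> X" for u
    proof -
      from that obtain v where "u = A *v v \<or> u = B *v v" unfolding X_def by blast
      then show ?thesis using sym_dot[OF sA, of z0 v] sym_dot[OF sB, of z0 v] h
        unfolding orthogonal_def by auto
    qed
    then have "orthogonal z0 z0" using orthogonal_to_span[of z0 X z0] z0U unfolding U_def by blast
    then show False using z0nz unfolding orthogonal_def by simp
  qed
  show ?thesis
  proof (cases "lin_indep2 (A *v z0) (B *v z0)")
    case True then show ?thesis using qa0 qb0 by blast
  next
    case False
    then obtain s t where st: "s *\<^sub>R (A *v z0) + t *\<^sub>R (B *v z0) = 0" and stnz: "\<not> (s = 0 \<and> t = 0)"
      unfolding lin_indep2_def by blast
    define N where "N = s *\<^sub>R A + t *\<^sub>R B"
    have sN: "symmetric_matrix N" unfolding N_def using symmetric_comb[OF sA sB] .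
    have Nz0: "N *v z0 = 0" unfolding N_def mv_lin using st .
    have "\<not> (\<forall>z. 0 \<le> z \<bullet> (N *v z))" using nopsd[OF stnz] sN unfolding N_def psd_matrix_def by blast
    then obtain y where "\<not> 0 \<le> y \<bullet> (N *v y)" by blast
    then have ny: "y \<bullet> (N *v y) < 0" by simp
    have "\<not> psd_matrix ((- s) *\<^sub>R A + (- t) *\<^sub>R B)" using nopsd[of "-s" "-t"] stnz by simp
    then have "\<not> (\<forall>z. 0 \<le> z \<bullet> (((- s) *\<^sub>R A + (- t) *\<^sub>R B) *v z))"
      using symmetric_comb[OF sA sB, of "-s" "-t"] unfolding psd_matrix_def by blast
    then obtain x where "\<not> 0 \<le> x \<bullet> (((- s) *\<^sub>R A + (- t) *\<^sub>R B) *v x)" by blast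
    then have "x \<bullet> (((- s) *\<^sub>R A + (- t) *\<^sub>R B) *v x) < 0" by simp
    then have px: "x \<bullet> (N *v x) > 0" unfolding N_def qf_lin by simp
    show ?thesis
    proof (cases "s = 0")
      case False
      have Bz0: "B *v z0 \<noteq> 0"
      proof
        assume "B *v z0 = 0"
        then have "s *\<^sub>R (A *v z0) = 0" using st by simp
        then have "A *v z0 = 0" using False by simp
        then show False using notK \<open>B *v z0 = 0\<close> by simp
      qed
      obtain z where z: "z \<bullet> (N *v z) = 0" "z \<bullet> (B *v z) = 0" "lin_indep2 (N *v z) (B *v z)"
        using finish[OF sN sB Nz0 qb0 Bz0 px ny] by blast
      have qa: "z \<bullet> (A *v z) = 0" using z(1,2) False unfolding N_def qf_lin by simp
      have "lin_indep2 (A *v z) (B *v z)"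
        unfolding lin_indep2_def
      proof (intro allI impI)
        fix a b :: real
        assume h: "a *\<^sub>R (A *v z) + b *\<^sub>R (B *v z) = 0"
        have "(a / s) *\<^sub>R (N *v z) + (b - a * t / s) *\<^sub>R (B *v z)
              = a *\<^sub>R (A *v z) + b *\<^sub>R (B *v z)"
          unfolding N_def mv_lin using False by (simp add: algebra_simps)
        then have "(a / s) *\<^sub>R (N *v z) + (b - a * t / s) *\<^sub>R (B *v z) = 0" using h by simp
        then have "a / s = 0 \<and> b - a * t / s = 0" using z(3) unfolding lin_indep2_def by blast
        then show "a = 0 \<and> b = 0" using False by simp
      qed
      then show ?thesis using qa z(2) by blast
    next
      case True
      then have t0: "t \<noteq> 0" using stnz by simp
      have Az0: "A *v z0 \<noteq> 0"
      proof
        assume "A *v z0 = 0"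
        then have "t *\<^sub>R (B *v z0) = 0" using st by simp
        then have "B *v z0 = 0" using t0 by simp
        then show False using notK \<open>A *v z0 = 0\<close> by simp
      qed
      obtain z where z: "z \<bullet> (N *v z) = 0" "z \<bullet> (A *v z) = 0" "lin_indep2 (N *v z) (A *v z)"
        using finish[OF sN sA Nz0 qa0 Az0 px ny] by blast
      have qb: "z \<bullet> (B *v z) = 0" using z(1) True t0 unfolding N_def qf_lin by simp
      have "lin_indep2 (A *v z) (B *v z)"
        unfolding lin_indep2_def
      proof (intro allI impI)
        fix a b :: real
        assume h: "a *\<^sub>R (A *v z) + b *\<^sub>R (B *v z) = 0"
        have "(b / t) *\<^sub>R (N *v z) + a *\<^sub>R (A *v z) = a *\<^sub>R (A *v z) + b *\<^sub>R (B *v z)"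
          unfolding N_def mv_lin using True t0 by (simp add: algebra_simps)
        then have "(b / t) *\<^sub>R (N *v z) + a *\<^sub>R (A *v z) = 0" using h by simp
        then have "b / t = 0 \<and> a = 0" using z(3) unfolding lin_indep2_def by blast
        then show "a = 0 \<and> b = 0" using t0 by simp
      qed
      then show ?thesis using qb z(2) by blast
    qed
  qed
qed

end
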